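(* Let $p$ be an odd prime and $M$ the sub-add move matrix, with $t$, $k$, $i$ as in the context. (a) If $t$ is even, then $\Gamma_{M,\,p}$ has no secondary cycles. (b) If $t\equiv1\pmod 4$ and $(1+i)^t=i$, then all secondary cycles have length $t$. (c) If $t\equiv3\pmod4$ and $(1+i)^t=i$, then all secondary cycles have length $2t$. (d) If $t\equiv1\pmod4$ and $(1+i)^t=-i$, then all secondary cycles have length $2t$. (e) If $t\equiv3\pmod4$ and $(1+i)^t=-i$, then all secondary cycles have length $t$.
   Context: The sub-add move matrix is $M=\begin{pmatrix}1&-1\\1&1\end{pmatrix}$. $\Gamma_{M,\,p}$ is the directed graph with vertex set $\mathbb Z_p^2$ and arcs $((a,b),(a-b,a+b))$ (mod $p$; loops allowed). A directed cycle is a cycle in the underlying undirected graph such that in the induced directed subgraph every vertex has in- and out-degree $1$; a loop is a directed $1$-cycle. Let $t$ be the multiplicative order of $-4$ in $GF(p)$ and $k=4t$ (the $\mathbb Z_p$-order of $M$). Let $i\in GF(p^2)$ with $i^2=-1$, chosen so that ${\rm ord}(1-i)\le{\rm ord}(1+i)$ (multiplicative orders). A primary cycle is a directed cycle of length $k$; a secondary cycle is a directed cycle that is neither primary nor a $1$-cycle. *)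

theory Defs
  imports "HOL-Number_Theory.Number_Theory"
begin

(* The sub-add move on Z_p^2, vertices represented by pairs of integers in {0..<p} *)
definition subadd :: "nat \<Rightarrow> int \<times> int \<Rightarrow> int \<times> int" where
  "subadd p v = ((fst v - snd v) mod int p, (fst v + snd v) mod int p)"

definition verts :: "nat \<Rightarrow> (int \<times> int) set" where
  "verts p = {0..<int p} \<times> {0..<int p}"

definition arc :: "nat \<Rightarrow> int \<times> int \<Rightarrow> int \<times> int \<Rightarrow> bool" where
  "arc p u v \<longleftrightarrow> u \<in> verts p \<and> v = subadd p u"

definition dcycle :: "nat \<Rightarrow> (int \<times> int) list \<Rightarrow> bool" where
  "dcycle p cs \<longleftrightarrow> cs \<noteq> [] \<and> distinct cs \<and> set cs \<subseteq> verts p \<and>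
     (\<forall>j < length cs. arc p (cs ! j) (cs ! ((j + 1) mod length cs)))"

(* t = multiplicative order of -4 in GF(p) *)
definition tord :: "nat \<Rightarrow> nat" where
  "tord p = ord p (nat ((-4) mod int p))"

(* primary cycle: directed cycle of length k = 4t;
   secondary: directed cycle neither primary nor a 1-cycle *)
definition secondary_cycle :: "nat \<Rightarrow> (int \<times> int) list \<Rightarrow> bool" where
  "secondary_cycle p cs \<longleftrightarrow> dcycle p cs \<and> length cs \<noteq> 4 * tord p \<and> length cs \<noteq> 1"

definition mord :: "'a::field \<Rightarrow> nat" where
  "mord x = (if \<exists>n>0. x ^ n = 1 then (LEAST n. n > 0 \<and> x ^ n = 1) else 0)"

end

theory Submission
  imports Defs "HOL-Computational_Algebra.Computational_Algebra"
begin

definition sai :: "int \<times> int \<Rightarrow> int \<times> int" where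
  "sai v = (fst v - snd v, fst v + snd v)"

definition modp :: "nat \<Rightarrow> int \<times> int \<Rightarrow> int \<times> int" where
  "modp p v = (fst v mod int p, snd v mod int p)"

lemma subadd_modp: "subadd p (modp p v) = modp p (sai v)"
  unfolding subadd_def modp_def sai_def
  by (simp add: mod_diff_eq mod_add_eq)

lemma modp_verts: "v \<in> verts p \<Longrightarrow> modp p v = v"
  unfolding modp_def verts_def by (cases v) auto

lemma subadd_verts: "p > 0 \<Longrightarrow> subadd p v \<in> verts p"
  unfolding subadd_def verts_def by auto

lemma iter_verts: "p > 0 \<Longrightarrow> v \<in> verts p \<Longrightarrow> (subadd p ^^ n) v \<in> verts p"
  by (induction n) (auto simp: subadd_verts)

lemma iter_modp: "v \<in> verts p \<Longrightarrow> (subadd p ^^ n) v = modp p ((sai ^^ n) v)"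
proof (induction n)
  case 0 then show ?case by (simp add: modp_verts)
next
  case (Suc n) then show ?case by (simp add: subadd_modp)
qed

lemma sai4: "(sai ^^ 4) v = (-4 * fst v, -4 * snd v)"
  by (simp add: sai_def numeral_eq_Suc algebra_simps)

lemma sai4q: "(sai ^^ (4 * q)) v = ((-4) ^ q * fst v, (-4) ^ q * snd v)"
proof (induction q)
  case 0 then show ?case by simp
next
  case (Suc q)
  have "(sai ^^ (4 * Suc q)) v = (sai ^^ 4) ((sai ^^ (4 * q)) v)"
    by (simp only: mult_Suc_right funpow_add o_apply)
  then show ?case using Suc by (simp add: sai4 algebra_simps)
qed

lemma cyc_nth:
  assumes "dcycle p cs" "j < length cs"
  shows "cs ! j = (subadd p ^^ j) (cs ! 0)"
  using assms(2)
proof (induction j)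
  case 0 then show ?case by simp
next
  case (Suc j)
  have "\<forall>j < length cs. arc p (cs ! j) (cs ! ((j + 1) mod length cs))"
    using assms(1) unfolding dcycle_def by blast
  then have "arc p (cs ! j) (cs ! ((j + 1) mod length cs))"
    using Suc.prems by (meson Suc_lessD)
  then have "arc p (cs ! j) (cs ! Suc j)" using Suc.prems by simp
  then show ?case using Suc by (simp add: arc_def)
qed

lemma cyc_full:
  assumes "dcycle p cs"
  shows "(subadd p ^^ length cs) (cs ! 0) = cs ! 0"
proof -
  obtain d where d: "length cs = Suc d" using assms unfolding dcycle_def
    by (cases cs) auto
  have "arc p (cs ! d) (cs ! ((d + 1) mod length cs))"
    using assms d unfolding dcycle_def by auto
  then have "subadd p (cs ! d) = cs ! 0" using d by (simp add: arc_def)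
  then show ?thesis using cyc_nth[OF assms, of d] d by simp
qed

lemma cyc_mult:
  assumes "dcycle p cs"
  shows "(subadd p ^^ (length cs * q)) (cs ! 0) = cs ! 0"
proof (induction q)
  case 0 then show ?case by simp
next
  case (Suc q)
  have "(subadd p ^^ (length cs * Suc q)) (cs ! 0) =
    (subadd p ^^ length cs) ((subadd p ^^ (length cs * q)) (cs ! 0))"
    by (simp only: mult_Suc_right funpow_add o_apply)
  then show ?case using Suc cyc_full[OF assms] by simp
qed

lemma cyc_dvd_iff:
  assumes "dcycle p cs"
  shows "(subadd p ^^ n) (cs ! 0) = cs ! 0 \<longleftrightarrow> length cs dvd n"
proof
  assume h: "(subadd p ^^ n) (cs ! 0) = cs ! 0"
  define d where "d = length cs"
  have dpos: "d > 0" using assms unfolding dcycle_def d_def by auto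
  have "n = d * (n div d) + n mod d" by simp
  then have "(subadd p ^^ n) (cs ! 0) = (subadd p ^^ (n mod d)) ((subadd p ^^ (d * (n div d))) (cs ! 0))"
    by (metis funpow_add o_apply add.commute)
  also have "\<dots> = (subadd p ^^ (n mod d)) (cs ! 0)" using cyc_mult[OF assms] d_def by simp
  also have "\<dots> = cs ! (n mod d)" using cyc_nth[OF assms, of "n mod d"] dpos d_def by simp
  finally have "cs ! (n mod d) = cs ! 0" using h by simp
  then have "n mod d = 0" using assms dpos d_def unfolding dcycle_def
    by (simp add: nth_eq_iff_index_eq)
  then show "length cs dvd n" using d_def by auto
next
  assume "length cs dvd n"
  then show "(subadd p ^^ n) (cs ! 0) = cs ! 0" using cyc_mult[OF assms] by auto
qed


lemma tord_facts:
  assumes "prime p" "odd p"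
  shows "tord p > 0" and "[(-4::int) ^ q = 1] (mod int p) \<longleftrightarrow> tord p dvd q"
proof -
  define a where "a = nat ((-4) mod int p)"
  have p0: "p > 0" using assms prime_gt_0_nat by blast
  have ia: "int a = (-4) mod int p" unfolding a_def using p0 by simp
  have "\<not> p dvd a"
  proof
    assume "p dvd a"
    then have "int p dvd (-4) mod int p" using ia by (metis of_nat_dvd_iff)
    then have "int p dvd 4"
      by (metis dvd_minus_iff dvd_mod_iff dvd_refl)
    then have "p dvd 4" by presburger
    then have "p dvd 2 * 2" by simp
    then have "p dvd 2" using assms(1) prime_dvd_mult_nat by blast
    then have "p \<le> 2" by (simp add: dvd_imp_le)
    moreover have "p \<ge> 2" using assms(1) prime_ge_2_nat by blast
    ultimately have "p = 2" by simp
    then show False using assms(2) by simp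
  qed
  then have "coprime p a" using assms(1) prime_imp_coprime_nat by blast
  then show "tord p > 0" unfolding tord_def a_def[symmetric] by simp
  have "[(-4::int) ^ q = 1] (mod int p) \<longleftrightarrow> [(int a) ^ q = int 1] (mod int p)"
    unfolding ia cong_def by (simp add: power_mod)
  also have "\<dots> \<longleftrightarrow> [a ^ q = 1] (mod p)"
    by (metis cong_int_iff of_nat_power)
  also have "\<dots> \<longleftrightarrow> tord p dvd q" unfolding tord_def a_def[symmetric] by (rule ord_divides)
  finally show "[(-4::int) ^ q = 1] (mod int p) \<longleftrightarrow> tord p dvd q" .
qed

lemma coprime_vert:
  assumes "prime p" "0 \<le> a" "a < int p" "a \<noteq> 0"
  shows "coprime a (int p)"
proof -
  have "\<not> int p dvd a"
    using assms by (meson zdvd_not_zless zless_imp_add1_zle dual_order.strict_iff_order)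
  then show ?thesis
    by (metis assms(1) coprime_commute prime_imp_coprime prime_nat_int_transfer)
qed

lemma iter4_iff:
  assumes "prime p" "odd p" "v \<in> verts p" "v \<noteq> (0, 0)"
  shows "(subadd p ^^ (4 * q)) v = v \<longleftrightarrow> tord p dvd q"
proof -
  obtain a b where v: "v = (a, b)" by (cases v)
  have ab: "0 \<le> a" "a < int p" "0 \<le> b" "b < int p" using assms(3) v unfolding verts_def by auto
  have "(subadd p ^^ (4 * q)) v = ((-4) ^ q * a mod int p, (-4) ^ q * b mod int p)"
    using iter_modp[OF assms(3)] v by (simp add: sai4q modp_def)
  then have "(subadd p ^^ (4 * q)) v = v \<longleftrightarrow>
      [(-4) ^ q * a = 1 * a] (mod int p) \<and> [(-4) ^ q * b = 1 * b] (mod int p)"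
    using ab v by (simp add: cong_def)
  also have "\<dots> \<longleftrightarrow> [(-4::int) ^ q = 1] (mod int p)"
  proof (cases "a = 0")
    case True
    then have "b \<noteq> 0" using assms(4) v by auto
    then have "coprime b (int p)" using coprime_vert[OF assms(1)] ab by auto
    then have e: "[(-4)^q*b = 1*b] (mod int p) \<longleftrightarrow> [(-4::int)^q = 1] (mod int p)"
      by (rule cong_mult_rcancel)
    have "[(-4)^q*a = 1*a] (mod int p)" using True by simp
    then show ?thesis using e by blast
  next
    case False
    then have c: "coprime a (int p)" using coprime_vert[OF assms(1)] ab by auto
    show ?thesis
    proof
      assume "[(-4) ^ q * a = 1 * a] (mod int p) \<and> [(-4) ^ q * b = 1 * b] (mod int p)"
      then show "[(-4::int) ^ q = 1] (mod int p)" using c cong_mult_rcancel by blast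
    next
      assume "[(-4::int) ^ q = 1] (mod int p)"
      then show "[(-4) ^ q * a = 1 * a] (mod int p) \<and> [(-4) ^ q * b = 1 * b] (mod int p)"
        using cong_mult[OF _ cong_refl] by blast
    qed
  qed
  also have "\<dots> \<longleftrightarrow> tord p dvd q" using tord_facts[OF assms(1,2)] by blast
  finally show ?thesis .
qed

lemma dvd8: "(d::nat) dvd 8*m \<Longrightarrow> \<not> 4 dvd d \<Longrightarrow> d dvd 4*m"
proof -
  assume h: "d dvd 8*m" "\<not> 4 dvd d"
  obtain k where k: "8*m = d*k" using h(1) by blast
  show ?thesis
  proof (cases "even k")
    case True
    then obtain j where "k = 2*j" by blast
    then have "4*m = d*j" using k by simp
    then show ?thesis by simp
  next
    case False
    have c2: "coprime (2::nat) k" using False by simp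
    have c: "coprime ((2::nat)^3) k" using c2 by (metis coprime_power_left_iff)
    have "2^3 dvd d*k" using k by (metis dvd_triv_left numeral_Bit0 power3_eq_cube mult_2 numeral_times_numeral semiring_norm(12) semiring_norm(13) mult.assoc)
    then have "2^3 dvd d" using c coprime_dvd_mult_left_iff by blast
    then have "4 dvd d" by (simp add: dvd_trans[of 4 8 d])
    then show ?thesis using h by simp
  qed
qed

lemma cyc_basic:
  assumes "prime p" "dcycle p cs" "length cs \<noteq> 1"
  shows "cs ! 0 \<in> verts p" "cs ! 0 \<noteq> (0, 0)"
proof -
  show v: "cs ! 0 \<in> verts p" using assms(2) unfolding dcycle_def
    by (metis length_greater_0_conv nth_mem subsetD)
  show "cs ! 0 \<noteq> (0, 0)"
  proof
    assume "cs ! 0 = (0, 0)"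
    then have "(subadd p ^^ 1) (cs ! 0) = cs ! 0" by (simp add: subadd_def)
    then have "length cs dvd 1" using cyc_dvd_iff[OF assms(2)] by blast
    then show False using assms(3) by simp
  qed
qed

lemma part_a:
  assumes "prime p" "odd p" "even (tord p)"
  shows "\<not> secondary_cycle p cs"
proof
  assume "secondary_cycle p cs"
  then have cyc: "dcycle p cs" and d4: "length cs \<noteq> 4 * tord p" and d1: "length cs \<noteq> 1"
    unfolding secondary_cycle_def by auto
  define d where "d = length cs"
  define t where "t = tord p"
  note vv = cyc_basic[OF assms(1) cyc d1]
  have iff: "\<And>n. (subadd p ^^ n) (cs ! 0) = cs ! 0 \<longleftrightarrow> d dvd n"
    using cyc_dvd_iff[OF cyc] d_def by blast
  have i4: "\<And>q. d dvd 4 * q \<longleftrightarrow> t dvd q"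
    using iter4_iff[OF assms(1,2) vv] iff t_def by blast
  have tpos: "t > 0" using tord_facts[OF assms(1,2)] t_def by blast
  obtain m where m: "t = 2 * m" using assms(3) t_def by blast
  have mpos: "m > 0" using tpos m by simp
  have dt: "d dvd 4 * t" using i4 by simp
  show False
  proof (cases "4 dvd d")
    case True
    then obtain q where q: "d = 4 * q" by blast
    then have "t dvd q" using i4[of q] by simp
    then have "4 * t dvd d" using q by simp
    then have "d = 4 * t" using dt by (simp add: dvd_antisym)
    then show False using d4 d_def t_def by simp
  next
    case False
    have "d dvd 8 * m" using dt m by simp
    then have "d dvd 4 * m" using dvd8 False by blast
    then have "t dvd m" using i4 by simp
    then show False using m mpos by (simp add: dvd_imp_le)
  qed
qed



definition phi :: "'a::field \<Rightarrow> int \<times> int \<Rightarrow> 'a" where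
  "phi i v = of_int (fst v) + of_int (snd v) * i"

definition psi :: "'a::field \<Rightarrow> int \<times> int \<Rightarrow> 'a" where
  "psi i v = of_int (fst v) - of_int (snd v) * i"

lemma pm1: "2 * (a::'a::field) = (a + x) + (a - x)" by (simp add: field_simps)
lemma pm2: "2 * (x::'a::field) = (a + x) - (a - x)" by (simp add: field_simps)

locale gf =
  fixes p :: nat and i :: "'a::{field,finite}"
  assumes prm: "prime p" and odp: "odd p" and crd: "card (UNIV :: 'a set) = p ^ 2"
    and isq: "i ^ 2 = -1"
begin

lemma char_p: "CHAR('a) = p"
proof -
  have pos: "CHAR('a) > 0" by (rule finite_imp_CHAR_pos) simp
  then have pr: "prime CHAR('a)" by (rule prime_CHAR_semidom)
  have "CHAR('a) dvd p ^ 2" using CHAR_dvd_CARD crd by metis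
  then have "CHAR('a) dvd p" using pr prime_dvd_power by blast
  then show ?thesis using pr prm by (simp add: primes_dvd_imp_eq)
qed

lemma ofint0: "of_int x = (0::'a) \<longleftrightarrow> int p dvd x"
  using of_int_eq_0_iff_char_dvd[where 'a='a] char_p by simp

lemma ofint_eq: "of_int x = (of_int y::'a) \<longleftrightarrow> [x = y] (mod int p)"
  using of_int_eq_iff_cong_CHAR[where 'a='a] char_p by simp

lemma ofint_mod: "of_int (x mod int p) = (of_int x :: 'a)"
  unfolding ofint_eq by simp

lemma two_ne0: "(2::'a) \<noteq> 0"
proof
  assume "(2::'a) = 0"
  then have "of_int 2 = (0::'a)" by simp
  then have "int p dvd 2" using ofint0 by blast
  then have "p dvd 2" by presburger
  then have "p \<le> 2" by (simp add: dvd_imp_le)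
  moreover have "p \<ge> 2" using prm prime_ge_2_nat by blast
  ultimately show False using odp by simp
qed

lemma m1_ne1: "(-1::'a) \<noteq> 1"
  using two_ne0 by (metis add_eq_0_iff one_add_one)

lemma ii: "i * i = -1" using isq by (simp add: power2_eq_square)

lemma iix: "i * (i * x) = - x"
  by (metis ii mult.assoc mult_minus1)

lemma i_ne0: "i \<noteq> 0" using ii by auto

lemma phi_sub: "phi i (subadd p w) = (1 + i) * phi i w"
proof -
  have "phi i (subadd p w) = of_int (fst w - snd w) + of_int (fst w + snd w) * i"
    unfolding phi_def subadd_def by (simp only: fst_conv snd_conv ofint_mod)
  also have "\<dots> = (1 + i) * phi i w"
    unfolding phi_def by (simp add: algebra_simps iix)
  finally show ?thesis .
qed

lemma psi_sub: "psi i (subadd p w) = (1 - i) * psi i w"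
proof -
  have "psi i (subadd p w) = of_int (fst w - snd w) - of_int (fst w + snd w) * i"
    unfolding psi_def subadd_def by (simp only: fst_conv snd_conv ofint_mod)
  also have "\<dots> = (1 - i) * psi i w"
    unfolding psi_def by (simp add: algebra_simps iix)
  finally show ?thesis .
qed

lemma phi_iter: "phi i ((subadd p ^^ n) w) = (1 + i) ^ n * phi i w"
  by (induction n) (simp_all add: phi_sub)

lemma psi_iter: "psi i ((subadd p ^^ n) w) = (1 - i) ^ n * psi i w"
  by (induction n) (simp_all add: psi_sub)

lemma inj_pp:
  assumes "u \<in> verts p" "w \<in> verts p" "phi i u = phi i w" "psi i u = psi i w"
  shows "u = w"
proof -
  obtain a b where u: "u = (a, b)" by (cases u)
  obtain c d where w: "w = (c, d)" by (cases w)
  have r: "0 \<le> a" "a < int p" "0 \<le> b" "b < int p" "0 \<le> c" "c < int p" "0 \<le> d" "d < int p"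
    using assms(1,2) u w unfolding verts_def by auto
  have e1: "of_int a + of_int b * i = (of_int c + of_int d * i :: 'a)"
    using assms(3) u w unfolding phi_def by simp
  have e2: "of_int a - of_int b * i = (of_int c - of_int d * i :: 'a)"
    using assms(4) u w unfolding psi_def by simp
  have "2 * (of_int a :: 'a) = (of_int a + of_int b * i) + (of_int a - of_int b * i)"
    by (rule pm1)
  also have "\<dots> = (of_int c + of_int d * i) + (of_int c - of_int d * i)" by (simp only: e1 e2)
  also have "\<dots> = 2 * of_int c" by (rule pm1[symmetric])
  finally have "2 * (of_int a :: 'a) = 2 * of_int c" .
  then have "(of_int a :: 'a) = of_int c" using two_ne0 by simp
  then have "[a = c] (mod int p)" using ofint_eq by blast
  then have ac: "a = c" using r unfolding cong_def by (metis mod_pos_pos_trivial)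
  have "2 * (of_int b * i :: 'a) = (of_int a + of_int b * i) - (of_int a - of_int b * i)"
    by (rule pm2)
  also have "\<dots> = (of_int c + of_int d * i) - (of_int c - of_int d * i)" by (simp only: e1 e2)
  also have "\<dots> = 2 * (of_int d * i)" by (rule pm2[symmetric])
  finally have "2 * (of_int b * i :: 'a) = 2 * (of_int d * i)" .
  then have "(of_int b :: 'a) = of_int d" using two_ne0 i_ne0 by simp
  then have "[b = d] (mod int p)" using ofint_eq by blast
  then have bd: "b = d" using r unfolding cong_def by (metis mod_pos_pos_trivial)
  show ?thesis using u w ac bd by simp
qed

lemma neg4: "(-4::'a) ^ n = 1 \<longleftrightarrow> tord p dvd n"
proof -
  have "(-4::'a) ^ n = of_int ((-4) ^ n)" by simp
  then have "(-4::'a) ^ n = 1 \<longleftrightarrow> [(-4::int) ^ n = 1] (mod int p)"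
    using ofint_eq[of "(-4)^n" 1] by simp
  then show ?thesis using tord_facts[OF prm odp] by blast
qed

lemma a4: "(1 + i) ^ 4 = (-4::'a)"
proof -
  have "(1 + i) ^ 2 = 2 * i" by (simp add: power2_eq_square algebra_simps iix ii)
  moreover have "(1 + i) ^ 4 = ((1 + i) ^ 2) ^ 2" by (simp flip: power_mult)
  ultimately have "(1 + i) ^ 4 = (2 * i) ^ 2" by simp
  also have "\<dots> = 4 * (i * i)" by (simp add: power2_eq_square)
  finally show ?thesis by (simp add: ii)
qed

lemma b4: "(1 - i) ^ 4 = (-4::'a)"
proof -
  have "(1 - i) ^ 2 = - 2 * i" by (simp add: power2_eq_square algebra_simps iix ii)
  moreover have "(1 - i) ^ 4 = ((1 - i) ^ 2) ^ 2" by (simp flip: power_mult)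
  ultimately have "(1 - i) ^ 4 = (- 2 * i) ^ 2" by simp
  also have "\<dots> = 4 * (i * i)" by (simp add: power2_eq_square)
  finally show ?thesis by (simp add: ii)
qed

end


context gf begin

lemma i4: "i ^ 4 = 1"
proof -
  have "i ^ 4 = (i * i) * (i * i)" by (simp add: power4_eq_xxxx mult.assoc)
  then show ?thesis by (simp add: ii)
qed

lemma bpow:
  assumes "odd t" "(1 + i) ^ t = e * i" "e * e = 1"
  shows "t mod 4 = 1 \<Longrightarrow> (1 - i) ^ t = e" and "t mod 4 = 3 \<Longrightarrow> (1 - i) ^ t = - e"
proof -
  have ab: "(1 + i) * (1 - i) = 2" by (simp add: algebra_simps ii)
  have P: "e * i * (1 - i) ^ t = 2 ^ t"
    using assms(2) ab by (metis power_mult_distrib)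
  have sq: "(1 + i) ^ 2 = 2 * i" by (simp add: power2_eq_square algebra_simps iix ii)
  have "((1 + i) ^ t) ^ 2 = ((1 + i) ^ 2) ^ t" by (simp flip: power_mult add: mult.commute)
  also have "\<dots> = 2 ^ t * i ^ t" by (simp add: sq power_mult_distrib)
  finally have "2 ^ t * i ^ t = ((1 + i) ^ t) ^ 2" by simp
  also have "\<dots> = (e * e) * (i * i)" using assms(2) by (simp add: power2_eq_square algebra_simps)
  also have "\<dots> = -1" using assms(3) ii by simp
  finally have Q: "2 ^ t * i ^ t = (-1::'a)" .
  obtain s where s: "t = 4 * s + t mod 4" by (metis div_mult_mod_eq mult.commute)
  have it: "i ^ t = i ^ (t mod 4)"
  proof -
    have "i ^ t = (i ^ 4) ^ s * i ^ (t mod 4)" by (subst s) (simp add: power_add power_mult)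
    then show ?thesis by (simp add: i4)
  qed
  have key: "e * (1 - i) ^ t = - (2 ^ t * i)"
  proof -
    have "e * (1 - i) ^ t = - ((e * i * (1 - i) ^ t) * i)" by (simp add: algebra_simps iix)
    then show ?thesis using P by simp
  qed
  have fin: "(1 - i) ^ t = e * (e * (1 - i) ^ t)" using assms(3) by (simp add: mult.assoc[symmetric])
  show "t mod 4 = 1 \<Longrightarrow> (1 - i) ^ t = e"
  proof -
    assume "t mod 4 = 1"
    then have "2 ^ t * i = (-1::'a)" using Q it by simp
    then show ?thesis using fin key by simp
  qed
  show "t mod 4 = 3 \<Longrightarrow> (1 - i) ^ t = - e"
  proof -
    assume "t mod 4 = 3"
    then have "i ^ t = - i" using it by (simp add: power3_eq_cube ii)
    then have "2 ^ t * i = (1::'a)" using Q by simp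
    then show ?thesis using fin key by simp
  qed
qed


lemma bcase:
  assumes "odd (tord p)" "(1 + i) ^ tord p = e * i" "e * e = 1" "secondary_cycle p cs"
  shows "(1 - i) ^ tord p = 1 \<Longrightarrow> length cs = tord p"
    and "(1 - i) ^ tord p = -1 \<Longrightarrow> length cs = 2 * tord p"
proof -
  have cyc: "dcycle p cs" and d4: "length cs \<noteq> 4 * tord p" and d1: "length cs \<noteq> 1"
    using assms(4) unfolding secondary_cycle_def by auto
  define d where "d = length cs"
  define t where "t = tord p"
  define v where "v = cs ! 0"
  have p0: "p > 0" using prm prime_gt_0_nat by blast
  have vv: "v \<in> verts p" "v \<noteq> (0, 0)" using cyc_basic[OF prm cyc d1] v_def by auto
  have iff: "\<And>n. (subadd p ^^ n) v = v \<longleftrightarrow> d dvd n"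
    using cyc_dvd_iff[OF cyc] d_def v_def by blast
  have tpos: "t > 0" using tord_facts[OF prm odp] t_def by blast
  have dt: "d dvd 4 * t" using iter4_iff[OF prm odp vv, of t] iff t_def by simp
  have at: "(1 + i) ^ t = e * i" using assms(2) t_def by simp
  have phi0: "phi i v = 0"
  proof (rule ccontr)
    assume nz: "phi i v \<noteq> 0"
    have "(1 + i) ^ d * phi i v = phi i v" using iff[of d] phi_iter[of d v] by simp
    then have a1: "(1 + i) ^ d = 1" using nz by simp
    have "(-4::'a) ^ d = ((1 + i) ^ d) ^ 4" by (simp flip: a4 power_mult add: mult.commute)
    then have "(-4::'a) ^ d = 1" using a1 by simp
    then have "t dvd d" using neg4 t_def by simp
    then obtain f where f: "d = t * f" by blast
    have "t * f dvd t * 4" using dt f by (simp add: mult.commute)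
    then have f4: "f dvd 4" using tpos by simp
    have "f \<le> 4" using f4 by (simp add: dvd_imp_le)
    moreover have "f \<noteq> 4" using d4 f d_def t_def by auto
    ultimately have "f = 0 \<or> f = 1 \<or> f = 2 \<or> f = 3" by presburger
    then have "f dvd 2" using f4 by auto
    then have "d dvd 2 * t" using f by (simp add: mult.commute)
    then obtain k where k: "2 * t = d * k" by blast
    have "(1 + i) ^ (2 * t) = 1" using a1 k by (simp add: power_mult)
    moreover have "(1 + i) ^ (2 * t) = (e * e) * (i * i)"
      using at by (simp add: power_mult mult.commute[of 2] power2_eq_square algebra_simps)
    ultimately show False using assms(3) ii m1_ne1 by simp
  qed
  have psinz: "psi i v \<noteq> 0"
  proof
    assume "psi i v = 0"
    then have "v = (0, 0)" using inj_pp[OF vv(1), of "(0,0)"] phi0 p0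
      by (simp add: phi_def psi_def verts_def)
    then show False using vv by simp
  qed
  have biff: "\<And>n. (1 - i) ^ n = 1 \<longleftrightarrow> d dvd n"
  proof
    fix n assume h: "(1 - i) ^ n = 1"
    have w: "(subadd p ^^ n) v \<in> verts p" using iter_verts[OF p0 vv(1)] .
    have "phi i ((subadd p ^^ n) v) = phi i v" using phi_iter phi0 by simp
    moreover have "psi i ((subadd p ^^ n) v) = psi i v" using psi_iter h by simp
    ultimately have "(subadd p ^^ n) v = v" using inj_pp[OF w vv(1)] by blast
    then show "d dvd n" using iff by blast
  next
    fix n assume "d dvd n"
    then have "(subadd p ^^ n) v = v" using iff by blast
    then have "(1 - i) ^ n * psi i v = psi i v" using psi_iter[of n v] by simp
    then show "(1 - i) ^ n = 1" using psinz by simp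
  qed
  have "(1 - i) ^ d = 1" using biff by simp
  then have "(-4::'a) ^ d = 1"
    by (metis b4 power_mult mult.commute power_one)
  then have td: "t dvd d" using neg4 t_def by simp
  show "(1 - i) ^ tord p = 1 \<Longrightarrow> length cs = tord p"
  proof -
    assume "(1 - i) ^ tord p = 1"
    then have "d dvd t" using biff t_def by simp
    then show ?thesis using td d_def t_def by (simp add: dvd_antisym)
  qed
  show "(1 - i) ^ tord p = -1 \<Longrightarrow> length cs = 2 * tord p"
  proof -
    assume h: "(1 - i) ^ tord p = -1"
    then have "(1 - i) ^ (2 * t) = 1" using t_def by (simp add: power_mult mult.commute[of 2])
    then have "d dvd 2 * t" using biff by blast
    obtain f where f: "d = t * f" using td by blast
    have "t * f dvd t * 2" using \<open>d dvd 2 * t\<close> f by (simp add: mult.commute)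
    then have f2: "f dvd 2" using tpos by simp
    have "f \<noteq> 1"
    proof
      assume "f = 1"
      then have "(1 - i) ^ t = 1" using biff f by simp
      then show False using h t_def m1_ne1 by simp
    qed
    moreover have "f \<noteq> 0" using f2 by (metis dvd_0_left_iff zero_neq_numeral)
    moreover have "f \<le> 2" using f2 by (simp add: dvd_imp_le)
    ultimately have "f = 2" by simp
    then show ?thesis using f d_def t_def by simp
  qed
qed

end

theorem theorem7p2:
  fixes p :: nat
  assumes "prime p" and "odd p"
  shows "(even (tord p) \<longrightarrow> (\<nexists>cs. secondary_cycle p cs)) \<and>
    (\<forall>i :: 'a :: {field, finite}.
       card (UNIV :: 'a set) = p ^ 2 \<and> i ^ 2 = -1 \<and> mord (1 - i) \<le> mord (1 + i) \<longrightarrow>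
       ((tord p mod 4 = 1 \<and> (1 + i) ^ tord p = i \<longrightarrow>
            (\<forall>cs. secondary_cycle p cs \<longrightarrow> length cs = tord p)) \<and>
        (tord p mod 4 = 3 \<and> (1 + i) ^ tord p = i \<longrightarrow>
            (\<forall>cs. secondary_cycle p cs \<longrightarrow> length cs = 2 * tord p)) \<and>
        (tord p mod 4 = 1 \<and> (1 + i) ^ tord p = - i \<longrightarrow>
            (\<forall>cs. secondary_cycle p cs \<longrightarrow> length cs = 2 * tord p)) \<and>
        (tord p mod 4 = 3 \<and> (1 + i) ^ tord p = - i \<longrightarrow>
            (\<forall>cs. secondary_cycle p cs \<longrightarrow> length cs = tord p))))"
proof (rule conjI)
  show "even (tord p) \<longrightarrow> (\<nexists>cs. secondary_cycle p cs)"
    using part_a[OF assms] by blast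
next
  show "\<forall>i :: 'a :: {field, finite}.
       card (UNIV :: 'a set) = p ^ 2 \<and> i ^ 2 = -1 \<and> mord (1 - i) \<le> mord (1 + i) \<longrightarrow>
       ((tord p mod 4 = 1 \<and> (1 + i) ^ tord p = i \<longrightarrow>
            (\<forall>cs. secondary_cycle p cs \<longrightarrow> length cs = tord p)) \<and>
        (tord p mod 4 = 3 \<and> (1 + i) ^ tord p = i \<longrightarrow>
            (\<forall>cs. secondary_cycle p cs \<longrightarrow> length cs = 2 * tord p)) \<and>
        (tord p mod 4 = 1 \<and> (1 + i) ^ tord p = - i \<longrightarrow>
            (\<forall>cs. secondary_cycle p cs \<longrightarrow> length cs = 2 * tord p)) \<and>
        (tord p mod 4 = 3 \<and> (1 + i) ^ tord p = - i \<longrightarrow>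
            (\<forall>cs. secondary_cycle p cs \<longrightarrow> length cs = tord p)))"
  proof (intro allI impI)
  fix i :: 'a
  assume h: "card (UNIV :: 'a set) = p ^ 2 \<and> i ^ 2 = -1 \<and> mord (1 - i) \<le> mord (1 + i)"
  interpret gf p i using assms h by unfold_locales auto
  have o1: "odd (tord p)" if "tord p mod 4 = 1" using that by presburger
  have o3: "odd (tord p)" if "tord p mod 4 = 3" using that by presburger
  have c1: "tord p mod 4 = 1 \<and> (1 + i) ^ tord p = i \<longrightarrow> (\<forall>cs. secondary_cycle p cs \<longrightarrow> length cs = tord p)"
  proof (intro allI impI)
    assume that: "tord p mod 4 = 1 \<and> (1 + i) ^ tord p = i"
    fix cs assume c: "secondary_cycle p cs"
    have e: "(1 + i) ^ tord p = 1 * i" using that by simp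
    have "(1 - i) ^ tord p = 1" using bpow(1)[OF o1 e] that by simp
    then show "length cs = tord p" using bcase(1)[OF o1 e _ c] that by simp
  qed
  have c2: "tord p mod 4 = 3 \<and> (1 + i) ^ tord p = i \<longrightarrow> (\<forall>cs. secondary_cycle p cs \<longrightarrow> length cs = 2 * tord p)"
  proof (intro allI impI)
    assume that: "tord p mod 4 = 3 \<and> (1 + i) ^ tord p = i"
    fix cs assume c: "secondary_cycle p cs"
    have e: "(1 + i) ^ tord p = 1 * i" using that by simp
    have "(1 - i) ^ tord p = -1" using bpow(2)[OF o3 e] that by simp
    then show "length cs = 2 * tord p" using bcase(2)[OF o3 e _ c] that by simp
  qed
  have c3: "tord p mod 4 = 1 \<and> (1 + i) ^ tord p = - i \<longrightarrow> (\<forall>cs. secondary_cycle p cs \<longrightarrow> length cs = 2 * tord p)"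
  proof (intro allI impI)
    assume that: "tord p mod 4 = 1 \<and> (1 + i) ^ tord p = - i"
    fix cs assume c: "secondary_cycle p cs"
    have e: "(1 + i) ^ tord p = (-1) * i" using that by simp
    have "(1 - i) ^ tord p = -1" using bpow(1)[OF o1 e] that by simp
    then show "length cs = 2 * tord p" using bcase(2)[OF o1 e _ c] that by simp
  qed
  have c4: "tord p mod 4 = 3 \<and> (1 + i) ^ tord p = - i \<longrightarrow> (\<forall>cs. secondary_cycle p cs \<longrightarrow> length cs = tord p)"
  proof (intro allI impI)
    assume that: "tord p mod 4 = 3 \<and> (1 + i) ^ tord p = - i"
    fix cs assume c: "secondary_cycle p cs"
    have e: "(1 + i) ^ tord p = (-1) * i" using that by simp
    have "(1 - i) ^ tord p = 1" using bpow(2)[OF o3 e] that by simp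
    then show "length cs = tord p" using bcase(1)[OF o3 e _ c] that by simp
  qed
  show "(tord p mod 4 = 1 \<and> (1 + i) ^ tord p = i \<longrightarrow>
            (\<forall>cs. secondary_cycle p cs \<longrightarrow> length cs = tord p)) \<and>
        (tord p mod 4 = 3 \<and> (1 + i) ^ tord p = i \<longrightarrow>
            (\<forall>cs. secondary_cycle p cs \<longrightarrow> length cs = 2 * tord p)) \<and>
        (tord p mod 4 = 1 \<and> (1 + i) ^ tord p = - i \<longrightarrow>
            (\<forall>cs. secondary_cycle p cs \<longrightarrow> length cs = 2 * tord p)) \<and>
        (tord p mod 4 = 3 \<and> (1 + i) ^ tord p = - i \<longrightarrow>
            (\<forall>cs. secondary_cycle p cs \<longrightarrow> length cs = tord p))"
    using c1 c2 c3 c4 by blast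
  qed
qed

end
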